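(* Let $0<w_1<w_2<\dots<w_n$ be integers with $\sum_{i=1}^n w_i<2^n-1$, such that $w([i])\ge 2^i-1$ for all $i\in[n-1]$. Let $\Delta\le 2^n/(3n^2)$ satisfy $d\le\Delta$. Then $w_i\le 2^{i-1}+\Delta$ for all $i\in[n]$.
   Context: Write $[i]=\{1,\dots,i\}$ and $w(S)=\sum_{j\in S}w_j$ for $S\subseteq[n]$. The frequency is $f_t=\#\{S\subseteq[n]:w(S)=t\}$. The parameter is $d=\sum_{0\le t<2^n}\max\{0,f_t-1\}$; under $\sum_i w_i<2^n-1$ this equals $\#\{0\le t<2^n:f_t=0\}$. *)

theory Defs
  imports Complex_Main
begin

text \<open>Weights are indexed by 1..n: w :: nat => int.\<close>

definition wsum :: "(nat \<Rightarrow> int) \<Rightarrow> nat set \<Rightarrow> int" where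
  "wsum w S = (\<Sum>j\<in>S. w j)"

definition freq :: "(nat \<Rightarrow> int) \<Rightarrow> nat \<Rightarrow> int \<Rightarrow> nat" where
  "freq w n t = card {S. S \<subseteq> {1..n} \<and> wsum w S = t}"

definition dpar :: "(nat \<Rightarrow> int) \<Rightarrow> nat \<Rightarrow> nat" where
  "dpar w n = (\<Sum>t\<in>{0..<(2::nat)^n}. max 0 (freq w n (int t) - 1))"

end

theory Submission
  imports Defs
begin

lemma fib: assumes "finite A" "finite B" "f ` A \<subseteq> B"
  shows "(\<Sum>b\<in>B. card {x\<in>A. f x = b}) = card A"
proof -
  have "(\<Sum>b\<in>B. card {x\<in>A. f x = b}) = (\<Sum>x\<in>A. 1)"
  proof (rule sum_multicount_gen[OF assms(2,1)], intro ballI)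
    fix x assume "x \<in> A"
    then have "{b\<in>B. f x = b} = {f x}" using assms(3) by auto
    then show "card {b\<in>B. f x = b} = 1" by simp
  qed
  then show ?thesis by simp
qed

theorem lemma3p3:
  fixes w :: "nat \<Rightarrow> int" and n :: nat and \<Delta> :: real
  assumes pos: "\<And>i. 1 \<le> i \<Longrightarrow> i \<le> n \<Longrightarrow> 0 < w i"
    and incr: "\<And>i. 1 \<le> i \<Longrightarrow> i < n \<Longrightarrow> w i < w (i + 1)"
    and total: "wsum w {1..n} < 2 ^ n - 1"
    and prefix: "\<And>i. 1 \<le> i \<Longrightarrow> i \<le> n - 1 \<Longrightarrow> wsum w {1..i} \<ge> 2 ^ i - 1"
    and Delta: "\<Delta> \<le> 2 ^ n / (3 * real n ^ 2)"
    and dle: "real (dpar w n) \<le> \<Delta>"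
  shows "\<forall>i\<in>{1..n}. real_of_int (w i) \<le> 2 ^ (i - 1) + \<Delta>"
proof
  fix i assume i: "i \<in> {1..n}"
  define P where "P = {S. S \<subseteq> {1..n}}"
  define g where "g = (\<lambda>S. nat (wsum w S))"
  define T where "T = {0..<(2::nat)^n}"
  have finP: "finite P" unfolding P_def by simp
  have cardP: "card P = 2^n" unfolding P_def using card_Pow[of "{1..n}"] by (simp add: Pow_def)
  have gnn: "0 \<le> wsum w S" if "S \<subseteq> {1..n}" for S
    unfolding wsum_def using that pos by (intro sum_nonneg) (auto simp: less_imp_le)
  have gle: "wsum w S \<le> wsum w {1..n}" if "S \<subseteq> {1..n}" for S
    unfolding wsum_def using that pos by (intro sum_mono2) (auto simp: less_imp_le)
  have elem: "w j \<le> wsum w S" if "S \<subseteq> {1..n}" "j \<in> S" for S j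
    unfolding wsum_def using that pos
    by (intro member_le_sum) (auto simp: less_imp_le intro: finite_subset)
  have mono: "w a \<le> w (a + k)" if "1 \<le> a" "a + k \<le> n" for a k
    using that
  proof (induction k)
    case 0 then show ?case by simp
  next
    case (Suc k)
    then have "w a \<le> w (a + k)" by simp
    also have "w (a + k) < w (a + k + 1)" using incr[of "a+k"] Suc.prems by simp
    finally show ?case by simp
  qed
  have gT: "g ` P \<subseteq> T"
  proof
    fix x assume "x \<in> g ` P"
    then obtain S where S: "S \<subseteq> {1..n}" "x = g S" unfolding P_def by auto
    have "wsum w S < 2^n" using gle[OF S(1)] total by linarith
    then show "x \<in> T" using S gnn[OF S(1)] unfolding T_def g_def
      by (simp add: nat_less_iff)
  qed
  have freq_eq: "freq w n (int t) = card {S\<in>P. g S = t}" for t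
  proof -
    have "{S. S \<subseteq> {1..n} \<and> wsum w S = int t} = {S\<in>P. g S = t}"
      unfolding P_def g_def using gnn by auto
    then show ?thesis unfolding freq_def by simp
  qed
  have sumf: "(\<Sum>t\<in>T. freq w n (int t)) = 2^n"
    using fib[OF finP _ gT] cardP unfolding freq_eq T_def by simp
  have dp: "dpar w n = (\<Sum>t\<in>T. freq w n (int t) - 1)"
    unfolding dpar_def T_def by simp
  define H where "H = g ` P"
  have pt: "freq w n (int t) \<le> (freq w n (int t) - 1) + (if t \<in> H then 1 else 0)" for t
  proof (cases "t \<in> H")
    case False
    then have "{S\<in>P. g S = t} = {}" unfolding H_def by auto
    then have "freq w n (int t) = 0" unfolding freq_eq by (simp only: card.empty)
    then show ?thesis by simp
  qed simp
  have "2^n \<le> (\<Sum>t\<in>T. (freq w n (int t) - 1) + (if t \<in> H then 1 else 0))"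
    unfolding sumf[symmetric] by (rule sum_mono) (rule pt)
  also have "\<dots> = dpar w n + card (T \<inter> H)"
    unfolding dp sum.distrib by (simp add: sum.If_cases T_def)
  finally have A: "2^n \<le> dpar w n + card (T \<inter> H)" .
  have i1: "1 \<le> i" "i \<le> n" using i by auto
  have HS: "H \<subseteq> g ` {S. S \<subseteq> {1..i-1}} \<union> {nat (w i)..<2^n}"
  proof
    fix x assume "x \<in> H"
    then obtain S where S: "S \<subseteq> {1..n}" "x = g S" unfolding H_def P_def by auto
    have xT: "x < 2^n" using gT S unfolding T_def P_def by auto
    show "x \<in> g ` {S. S \<subseteq> {1..i-1}} \<union> {nat (w i)..<2^n}"
    proof (cases "x < nat (w i)")
      case True
      have "S \<subseteq> {1..i-1}"
      proof
        fix j assume j: "j \<in> S"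
        show "j \<in> {1..i-1}"
        proof (rule ccontr)
          assume "j \<notin> {1..i-1}"
          then have "i \<le> j" "j \<le> n" using S j by auto
          then have "w i \<le> w j" using mono[of i "j - i"] i1 by simp
          also have "\<dots> \<le> wsum w S" using elem S j by simp
          finally show False using True S unfolding g_def by simp
        qed
      qed
      then show ?thesis using S by auto
    next
      case False then show ?thesis using xT by auto
    qed
  qed
  have "card H \<le> card (g ` {S. S \<subseteq> {1..i-1}}) + card {nat (w i)..<2^n}"
    by (rule order_trans[OF card_mono[OF _ HS] card_Un_le]) simp
  also have "card (g ` {S. S \<subseteq> {1..i-1}}) \<le> card {S. S \<subseteq> {1..i-1}}"
    by (rule card_image_le) simp
  also have "card {S. S \<subseteq> {1..i-1}} = 2^(i-1)"
    using card_Pow[of "{1..i-1}"] by (simp add: Pow_def)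
  finally have B: "card H \<le> 2^(i-1) + (2^n - nat (w i))" by simp
  have "card (T \<inter> H) \<le> card H" by (rule card_mono) (auto simp: H_def finP)
  have wi: "w i \<le> wsum w {1..n}" using elem[of "{1..n}" i] i by simp
  then have "w i \<le> 2^n" using total by linarith
  then have "nat (w i) \<le> 2^n" by (simp add: nat_le_iff)
  with A B \<open>card (T \<inter> H) \<le> card H\<close> have "nat (w i) \<le> dpar w n + 2^(i-1)" by linarith
  then have "w i \<le> int (dpar w n) + 2^(i-1)" by (simp add: nat_le_iff)
  then have "real_of_int (w i) \<le> real (dpar w n) + 2^(i-1)"
  proof -
    have "real_of_int (w i) \<le> real_of_int (int (dpar w n) + 2^(i-1))"
      using of_int_le_iff \<open>w i \<le> int (dpar w n) + 2^(i-1)\<close> by blast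
    then show ?thesis by simp
  qed
  then show "real_of_int (w i) \<le> 2 ^ (i - 1) + \<Delta>" using dle by linarith
qed

end
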